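(* (1) If $j\in\mathbb Z$ and $p,p'\in X_j$ are distinct points with $\pi_j(p)=\pi_j(p')$, then there is a vertical edge path in the $1$-skeleton of $X_j^{(1)}$ of combinatorial length at most $2$ containing $p$ and $p'$. (2) If $\sigma,\sigma'$ are $2$-cells of $X_j$ with $\pi_j(\sigma)\cap\pi_j(\sigma')\ne\emptyset$, then $\sigma\cap\sigma'\ne\emptyset$. (3) If $j\le j'$ are integers, $\hat\sigma$ is a $2$-cell of $Y_j$ and $\hat\sigma'$ a $2$-cell of $Y_{j'}$, and $\hat\pi^\infty(\hat\sigma)\cap\hat\pi^\infty(\hat\sigma')\ne\emptyset$, then $\hat\pi^{j'}(\hat\sigma)\cap\hat\pi^{j'}(\hat\sigma')\ne\emptyset$.
   Context: Standing construction ($n=2$). Fix an integer $L\ge100$, $m=4$, $m_v=3L$. For $j\in\mathbb Z$, $Y_j$ is the cell complex on $\mathbb R^2$ given by the tiling by rectangles $[am^{-j},(a+1)m^{-j}]\times[bm_v^{-j},(b+1)m_v^{-j}]$, $a,b\in\mathbb Z$; a $1$-cell of $Y_j$ is horizontal if it is a translate of $[0,m^{-j}]\times\{0\}$ and vertical if it is a translate of $\{0\}\times[0,m_v^{-j}]$. Let $\Phi(x,y)=(m^{-1}x,m_v^{-1}y)$. For $k,\ell\in\mathbb Z$, $i\in\{1,2,3\}$, let $a_{k,\ell,i}=\{k+\tfrac i4\}\times[(3\ell+i-1)m_v^{-1},(3\ell+i)m_v^{-1}]$. $\mathcal R$ is the equivalence relation on $\mathbb R^2$ generated by $p\sim p+(0,m_v^{-1})$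 for $p\in a_{k,\ell,i}$. $\Phi^j_*\mathcal R=\{(\Phi^jp,\Phi^jq):(p,q)\in\mathcal R\}$; $\mathcal R_j$ is generated by $\Phi^i_*\mathcal R$, $i<j$; $\mathcal R_\infty$ by all $\Phi^i_*\mathcal R$, $i\in\mathbb Z$. For $j\in\mathbb Z\cup\{\infty\}$, $X_j=\mathbb R^2/\mathcal R_j$, $\hat\pi^j$ the quotient map, $\pi_i^j:X_i\to X_j$ ($i\le j$) induced maps, $\pi_j=\pi_j^{j+1}$. $X_j$ carries the CW structure whose open cells are the images under $\hat\pi^j$ of open cells of $Y_j$; $X_j^{(k)}$ is the subdivision whose cells are images of cells of $Y_{j+k}$, and a $1$-cell of $X_j^{(k)}$ is vertical (horizontal) if it is the image of a vertical (horizontal) $1$-cell of $Y_{j+k}$. *)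

theory Defs
  imports Complex_Main
begin

definition mm :: real where "mm = 4"
definition mv :: "nat \<Rightarrow> real" where "mv L = 3 * real L"

definition PhiPow :: "nat \<Rightarrow> int \<Rightarrow> real \<times> real \<Rightarrow> real \<times> real" where
  "PhiPow L j p = (mm powr (- real_of_int j) * fst p, mv L powr (- real_of_int j) * snd p)"

definition aseg :: "nat \<Rightarrow> int \<Rightarrow> int \<Rightarrow> int \<Rightarrow> (real \<times> real) set" where
  "aseg L k l i = {(x,y). x = real_of_int k + real_of_int i / 4
      \<and> real_of_int (3*l + i - 1) / mv L \<le> y \<and> y \<le> real_of_int (3*l + i) / mv L}"

definition eqcl :: "('a \<times> 'a) set \<Rightarrow> ('a \<times> 'a) set" where
  "eqcl r = (r \<union> r\<inverse>)\<^sup>*"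

definition R0 :: "nat \<Rightarrow> ((real \<times> real) \<times> (real \<times> real)) set" where
  "R0 L = {(p, (fst p, snd p + 1 / mv L)) | p. \<exists>k l i. i \<in> {1,2,3} \<and> p \<in> aseg L k l i}"

definition Rbase :: "nat \<Rightarrow> ((real \<times> real) \<times> (real \<times> real)) set" where
  "Rbase L = eqcl (R0 L)"

definition pushR :: "nat \<Rightarrow> int \<Rightarrow> ((real \<times> real) \<times> (real \<times> real)) set
                       \<Rightarrow> ((real \<times> real) \<times> (real \<times> real)) set" where
  "pushR L i R = {(PhiPow L i p, PhiPow L i q) | p q. (p, q) \<in> R}"

definition Rj :: "nat \<Rightarrow> int \<Rightarrow> ((real \<times> real) \<times> (real \<times> real)) set" where
  "Rj L j = eqcl (\<Union>i\<in>{i. i < j}. pushR L i (Rbase L))"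

definition Rinf :: "nat \<Rightarrow> ((real \<times> real) \<times> (real \<times> real)) set" where
  "Rinf L = eqcl (\<Union>i. pushR L i (Rbase L))"

(* quotient map hat-pi for an equivalence relation: a point of R^2/R is its class *)
definition qmap :: "('a \<times> 'a) set \<Rightarrow> 'a \<Rightarrow> 'a set" where
  "qmap R p = R `` {p}"

definition Xsp :: "nat \<Rightarrow> int \<Rightarrow> (real \<times> real) set set" where
  "Xsp L j = UNIV // Rj L j"

(* pi_j = pi_j^{j+1} : X_j \<rightarrow> X_{j+1}, class C \<mapsto> class of C in R_{j+1} *)
definition pimap :: "nat \<Rightarrow> int \<Rightarrow> (real \<times> real) set \<Rightarrow> (real \<times> real) set" where
  "pimap L j C = Rj L (j + 1) `` C"

definition rectY :: "nat \<Rightarrow> int \<Rightarrow> int \<Rightarrow> int \<Rightarrow> (real \<times> real) set" where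
  "rectY L j a b = {(x,y).
      real_of_int a * mm powr (- real_of_int j) \<le> x \<and> x \<le> real_of_int (a+1) * mm powr (- real_of_int j)
    \<and> real_of_int b * mv L powr (- real_of_int j) \<le> y \<and> y \<le> real_of_int (b+1) * mv L powr (- real_of_int j)}"

definition cell2Y :: "nat \<Rightarrow> int \<Rightarrow> (real \<times> real) set \<Rightarrow> bool" where
  "cell2Y L j \<sigma> \<longleftrightarrow> (\<exists>a b. \<sigma> = rectY L j a b)"

definition cell2X :: "nat \<Rightarrow> int \<Rightarrow> (real \<times> real) set set \<Rightarrow> bool" where
  "cell2X L j \<sigma> \<longleftrightarrow> (\<exists>a b. \<sigma> = qmap (Rj L j) ` rectY L j a b)"

definition vedgeY :: "nat \<Rightarrow> int \<Rightarrow> int \<Rightarrow> int \<Rightarrow> (real \<times> real) set" where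
  "vedgeY L j a b = {(x,y). x = real_of_int a * mm powr (- real_of_int j)
    \<and> real_of_int b * mv L powr (- real_of_int j) \<le> y \<and> y \<le> real_of_int (b+1) * mv L powr (- real_of_int j)}"

definition vendsY :: "nat \<Rightarrow> int \<Rightarrow> int \<Rightarrow> int \<Rightarrow> (real \<times> real) set" where
  "vendsY L j a b = {(real_of_int a * mm powr (- real_of_int j), real_of_int b * mv L powr (- real_of_int j)),
                     (real_of_int a * mm powr (- real_of_int j), real_of_int (b+1) * mv L powr (- real_of_int j))}"

(* vertical closed 1-cell of X_j^{(1)} indexed by (a,b): image of a vertical 1-cell of Y_{j+1};
   its vertices are the images of the endpoints *)
definition vedgeX1 :: "nat \<Rightarrow> int \<Rightarrow> int \<Rightarrow> int \<Rightarrow> (real \<times> real) set set" where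
  "vedgeX1 L j a b = qmap (Rj L j) ` vedgeY L (j+1) a b"

definition vendsX1 :: "nat \<Rightarrow> int \<Rightarrow> int \<Rightarrow> int \<Rightarrow> (real \<times> real) set set" where
  "vendsX1 L j a b = qmap (Rj L j) ` vendsY L (j+1) a b"

(* S is contained in a vertical edge path of combinatorial length at most 2 in the
   1-skeleton of X_j^{(1)}: either a single vertical edge, or two vertical edges
   sharing a vertex (consecutive in the path). *)
definition vpath_le2 :: "nat \<Rightarrow> int \<Rightarrow> (real \<times> real) set set \<Rightarrow> bool" where
  "vpath_le2 L j S \<longleftrightarrow> (\<exists>a1 b1 a2 b2.
      ((a1, b1) = (a2, b2) \<or> vendsX1 L j a1 b1 \<inter> vendsX1 L j a2 b2 \<noteq> {})
    \<and> S \<subseteq> vedgeX1 L j a1 b1 \<union> vedgeX1 L j a2 b2)"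

end

theory Submission
  imports Defs
begin


lemma mv_pos: "L > 0 \<Longrightarrow> mv L > 0" by (simp add: mv_def)

lemma eqcl_refl: "(x,x) \<in> eqcl r" by (simp add: eqcl_def)
lemma eqcl_sym: "(x,y) \<in> eqcl r \<Longrightarrow> (y,x) \<in> eqcl r"
proof -
  assume "(x,y) \<in> eqcl r"
  hence "(y,x) \<in> ((r \<union> r\<inverse>)\<^sup>*)\<inverse>" unfolding eqcl_def by simp
  also have "((r \<union> r\<inverse>)\<^sup>*)\<inverse> = ((r \<union> r\<inverse>)\<inverse>)\<^sup>*" by (simp add: rtrancl_converse)
  also have "(r \<union> r\<inverse>)\<inverse> = r \<union> r\<inverse>" by auto
  finally show ?thesis unfolding eqcl_def .
qed
lemma eqcl_trans: "(x,y) \<in> eqcl r \<Longrightarrow> (y,z) \<in> eqcl r \<Longrightarrow> (x,z) \<in> eqcl r"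
  unfolding eqcl_def by (rule rtrancl_trans)
lemma eqcl_incl: "(x,y) \<in> r \<Longrightarrow> (x,y) \<in> eqcl r" unfolding eqcl_def by auto
lemma eqcl_mono: "r \<subseteq> s \<Longrightarrow> eqcl r \<subseteq> eqcl s" unfolding eqcl_def by (intro rtrancl_mono) auto
lemma eqcl_least:
  assumes "\<And>x. (x,x) \<in> W" "\<And>x y. (x,y)\<in>W \<Longrightarrow> (y,x)\<in>W"
    "\<And>x y z. (x,y)\<in>W \<Longrightarrow> (y,z)\<in>W \<Longrightarrow> (x,z)\<in>W" "r \<subseteq> W"
  shows "eqcl r \<subseteq> W"
proof
  fix p assume "p \<in> eqcl r"
  then obtain x y where p: "p=(x,y)" and "(x,y) \<in> (r \<union> r\<inverse>)\<^sup>*" unfolding eqcl_def by (cases p) auto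
  from this(2) have "(x,y) \<in> W"
  proof (induction rule: rtrancl_induct)
    case base then show ?case using assms(1) .
  next
    case (step y z)
    then have "(y,z) \<in> W" using assms(2,4) by blast
    then show ?case using step assms(3) by blast
  qed
  with p show "p \<in> W" by simp
qed

definition BB :: "nat \<Rightarrow> ((real\<times>real)\<times>(real\<times>real)) set" where
 "BB L = {(z,w). z = w \<or> (fst z = fst w \<and> (\<exists>k l i. i \<in> {1,2,3} \<and> fst z = real_of_int k + real_of_int i / 4
     \<and> real_of_int (3*l+i-1) \<le> mv L * snd z \<and> mv L * snd z \<le> real_of_int (3*l+i+1)
     \<and> real_of_int (3*l+i-1) \<le> mv L * snd w \<and> mv L * snd w \<le> real_of_int (3*l+i+1)))}"

lemma ki_unique:
  assumes "(i::int) \<in> {1,2,3}" "(i2::int) \<in> {1,2,3}"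
    "real_of_int k + real_of_int i / 4 = real_of_int k2 + real_of_int i2 / 4"
  shows "k = k2 \<and> i = i2"
proof -
  have "real_of_int (4*k+i) = real_of_int (4*k2+i2)" using assms(3) by simp
  hence "4*k+i = 4*k2+i2" by linarith
  thus ?thesis using assms(1,2) by auto presburger+
qed

lemma l_unique:
  assumes "real_of_int (3*l+i-1) \<le> t" "t \<le> real_of_int (3*l+i+1)"
    "real_of_int (3*l2+i-1) \<le> t" "t \<le> real_of_int (3*l2+i+1)"
  shows "(l::int) = l2"
proof -
  have "3*l+i-1 \<le> 3*l2+i+1" using assms(1,4) by linarith
  moreover have "3*l2+i-1 \<le> 3*l+i+1" using assms(2,3) by linarith
  ultimately show ?thesis by presburger
qed

lemma BB_refl: "(x,x) \<in> BB L" by (simp add: BB_def)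
lemma BB_sym: "(x,y) \<in> BB L \<Longrightarrow> (y,x) \<in> BB L" unfolding BB_def mem_Collect_eq case_prod_conv by metis
lemma BB_trans: assumes "(x,y) \<in> BB L" "(y,z) \<in> BB L" shows "(x,z) \<in> BB L"
proof (cases "x = y \<or> y = z")
  case True then show ?thesis using assms by auto
next
  case False
  from assms(1) False obtain k l i where A: "fst x = fst y" "i \<in> {1,2,3}" "fst x = real_of_int k + real_of_int i / 4"
     "real_of_int (3*l+i-1) \<le> mv L * snd x" "mv L * snd x \<le> real_of_int (3*l+i+1)"
     "real_of_int (3*l+i-1) \<le> mv L * snd y" "mv L * snd y \<le> real_of_int (3*l+i+1)"
    unfolding BB_def by blast
  from assms(2) False obtain k2 l2 i2 where B: "fst y = fst z" "i2 \<in> {1,2,3}" "fst y = real_of_int k2 + real_of_int i2 / 4"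
     "real_of_int (3*l2+i2-1) \<le> mv L * snd y" "mv L * snd y \<le> real_of_int (3*l2+i2+1)"
     "real_of_int (3*l2+i2-1) \<le> mv L * snd z" "mv L * snd z \<le> real_of_int (3*l2+i2+1)"
    unfolding BB_def by blast
  have "k = k2 \<and> i = i2" using ki_unique[OF A(2) B(2)] A(1,3) B(3) by simp
  moreover have "l = l2" using l_unique[of l i "mv L * snd y" l2] A B calculation by simp
  ultimately have "fst x = fst z \<and> (\<exists>k l i. i \<in> {1,2,3} \<and> fst x = real_of_int k + real_of_int i / 4
     \<and> real_of_int (3*l+i-1) \<le> mv L * snd x \<and> mv L * snd x \<le> real_of_int (3*l+i+1)
     \<and> real_of_int (3*l+i-1) \<le> mv L * snd z \<and> mv L * snd z \<le> real_of_int (3*l+i+1))"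
    using A B by metis
  thus ?thesis unfolding BB_def mem_Collect_eq case_prod_conv by blast
qed

lemma R0_BB: assumes "L > 0" shows "R0 L \<subseteq> BB L"
proof
  fix pq assume "pq \<in> R0 L"
  then obtain p k l i where pq: "pq = (p, (fst p, snd p + 1 / mv L))" "i \<in> {1,2,3}" "p \<in> aseg L k l i"
    unfolding R0_def by blast
  have mv: "mv L > 0" using mv_pos[OF assms] .
  from pq(3) have f: "fst p = real_of_int k + real_of_int i / 4"
    and y: "real_of_int (3*l+i-1) / mv L \<le> snd p" "snd p \<le> real_of_int (3*l+i) / mv L"
    unfolding aseg_def by (auto simp: case_prod_beta)
  have y1: "real_of_int (3*l+i-1) \<le> mv L * snd p" using y(1) mv by (simp add: divide_le_eq mult.commute)
  have y2: "mv L * snd p \<le> real_of_int (3*l+i)" using y(2) mv by (simp add: le_divide_eq mult.commute)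
  have e: "mv L * (snd p + 1 / mv L) = mv L * snd p + 1" using mv by (simp add: field_simps)
  have "real_of_int (3*l+i-1) \<le> mv L * snd p \<and> mv L * snd p \<le> real_of_int (3*l+i+1)
     \<and> real_of_int (3*l+i-1) \<le> mv L * (snd p + 1 / mv L) \<and> mv L * (snd p + 1 / mv L) \<le> real_of_int (3*l+i+1)"
    using y1 y2 e by simp
  hence "\<exists>k l i. i \<in> {1,2,3} \<and> fst p = real_of_int k + real_of_int i / 4
     \<and> real_of_int (3*l+i-1) \<le> mv L * snd p \<and> mv L * snd p \<le> real_of_int (3*l+i+1)
     \<and> real_of_int (3*l+i-1) \<le> mv L * (snd p + 1 / mv L) \<and> mv L * (snd p + 1 / mv L) \<le> real_of_int (3*l+i+1)"
    using pq(2) f by blast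
  thus "pq \<in> BB L" unfolding BB_def pq(1) by simp
qed

lemma Rbase_BB: "L > 0 \<Longrightarrow> Rbase L \<subseteq> BB L"
  unfolding Rbase_def using R0_BB by (intro eqcl_least) (auto intro: BB_refl BB_sym BB_trans)



lemma mm_step: "mm powr (- real_of_int (i+1)) = mm powr (- real_of_int i) / 4"
proof -
  have "mm powr (- real_of_int (i+1)) = mm powr (- real_of_int i - 1)" by simp
  also have "\<dots> = mm powr (- real_of_int i) / mm powr 1" by (rule powr_diff)
  finally show ?thesis by (simp add: mm_def)
qed

lemma mv_step: assumes "L > 0" shows "mv L powr (- real_of_int (i+1)) = mv L powr (- real_of_int i) / mv L"
proof -
  have "mv L powr (- real_of_int (i+1)) = mv L powr (- real_of_int i - 1)" by simp
  also have "\<dots> = mv L powr (- real_of_int i) / mv L powr 1" by (rule powr_diff)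
  finally show ?thesis using mv_pos[OF assms] by simp
qed

lemma mm_pos: "mm powr x > 0" by (simp add: mm_def)
lemma mvp_pos: "L > 0 \<Longrightarrow> mv L powr x > 0"
proof -
  assume "L > 0" hence "mv L > 0" by (rule mv_pos)
  thus ?thesis by simp
qed

lemma PhiPow_inj: assumes "L > 0" "PhiPow L i p = PhiPow L i q" shows "p = q"
proof -
  have a: "mm powr (- real_of_int i) \<noteq> 0" using mm_pos[of "- real_of_int i"] by simp
  have b: "mv L powr (- real_of_int i) \<noteq> 0" using mvp_pos[OF assms(1), of "- real_of_int i"] by simp
  from assms(2) have "fst p = fst q" "snd p = snd q" using a b by (auto simp: PhiPow_def)
  thus ?thesis by (simp add: prod_eq_iff)
qed

definition TT :: "nat \<Rightarrow> int \<Rightarrow> ((real\<times>real)\<times>(real\<times>real)) set" where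
  "TT L i = pushR L i (BB L)"

lemma TT_sym: "(z,w) \<in> TT L i \<Longrightarrow> (w,z) \<in> TT L i"
  unfolding TT_def pushR_def using BB_sym by blast

lemma TT_trans: assumes "L > 0" "(x,y) \<in> TT L i" "(y,z) \<in> TT L i" shows "(x,z) \<in> TT L i"
proof -
  obtain p q where 1: "x = PhiPow L i p" "y = PhiPow L i q" "(p,q) \<in> BB L"
    using assms(2) unfolding TT_def pushR_def by blast
  obtain q' r where 2: "y = PhiPow L i q'" "z = PhiPow L i r" "(q',r) \<in> BB L"
    using assms(3) unfolding TT_def pushR_def by blast
  have "q = q'" using PhiPow_inj[OF assms(1)] 1 2 by metis
  hence "(p,r) \<in> BB L" using 1 2 BB_trans by blast
  thus ?thesis using 1 2 unfolding TT_def pushR_def by blast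
qed

definition linelev :: "int \<Rightarrow> real \<Rightarrow> bool" where
  "linelev i X \<longleftrightarrow> (\<exists>a::int. \<not> 4 dvd a \<and> X = real_of_int a * mm powr (- real_of_int (i+1)))"

lemma TT_nontriv:
  assumes "L > 0" "(z,w) \<in> TT L i" "z \<noteq> w"
  shows "\<exists>a b. \<not> 4 dvd a \<and> fst z = real_of_int a * mm powr (- real_of_int (i+1)) \<and> fst w = fst z
     \<and> real_of_int b * mv L powr (- real_of_int (i+1)) \<le> snd z \<and> snd z \<le> real_of_int (b+2) * mv L powr (- real_of_int (i+1))
     \<and> real_of_int b * mv L powr (- real_of_int (i+1)) \<le> snd w \<and> snd w \<le> real_of_int (b+2) * mv L powr (- real_of_int (i+1))"
proof -
  obtain p q where 1: "z = PhiPow L i p" "w = PhiPow L i q" "(p,q) \<in> BB L"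
    using assms(2) unfolding TT_def pushR_def by blast
  have "p \<noteq> q" using 1 assms(3) by auto
  with 1(3) obtain k l c where B: "fst p = fst q" "c \<in> {1,2,3}" "fst p = real_of_int k + real_of_int c / 4"
     "real_of_int (3*l+c-1) \<le> mv L * snd p" "mv L * snd p \<le> real_of_int (3*l+c+1)"
     "real_of_int (3*l+c-1) \<le> mv L * snd q" "mv L * snd q \<le> real_of_int (3*l+c+1)"
    unfolding BB_def mem_Collect_eq case_prod_conv by blast
  define s where "s = mv L powr (- real_of_int (i+1))"
  have s0: "s > 0" unfolding s_def using mvp_pos[OF assms(1)] .
  have mv0: "mv L > 0" using mv_pos[OF assms(1)] .
  have sv: "mv L powr (- real_of_int i) = mv L * s" unfolding s_def mv_step[OF assms(1)] using mv0 by simp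
  have mv: "mm powr (- real_of_int i) = 4 * mm powr (- real_of_int (i+1))" unfolding mm_step by simp
  have fz: "fst z = real_of_int (4*k+c) * mm powr (- real_of_int (i+1))"
    unfolding 1 PhiPow_def mv using B(3) by (simp add: algebra_simps)
  have fw: "fst w = fst z" unfolding 1 PhiPow_def using B(1) by simp
  have sz: "snd z = (mv L * snd p) * s" unfolding 1 PhiPow_def sv by simp
  have sw: "snd w = (mv L * snd q) * s" unfolding 1 PhiPow_def sv by simp
  have nd: "\<not> 4 dvd (4*k+c)" using B(2) by (auto simp: dvd_add_right_iff)
  let ?b = "3*l+c-1"
  have e: "real_of_int (?b+2) = real_of_int (3*l+c+1)" by simp
  have "real_of_int ?b * s \<le> snd z" unfolding sz using B(4) s0 by (intro mult_right_mono) auto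
  moreover have "snd z \<le> real_of_int (?b+2) * s" unfolding sz e using B(5) s0 by (intro mult_right_mono) auto
  moreover have "real_of_int ?b * s \<le> snd w" unfolding sw using B(6) s0 by (intro mult_right_mono) auto
  moreover have "snd w \<le> real_of_int (?b+2) * s" unfolding sw e using B(7) s0 by (intro mult_right_mono) auto
  ultimately show ?thesis using fz fw nd unfolding s_def by blast
qed



lemma mm_int_pow: "d \<ge> 0 \<Longrightarrow> mm powr real_of_int d = 4 ^ nat d"
  by (simp add: powr_real_of_int mm_def)

lemma linelev_lt: assumes "linelev i X" "linelev i2 X" "i < i2" shows False
proof -
  obtain a where a: "\<not> 4 dvd a" "X = real_of_int a * mm powr (- real_of_int (i+1))"
    using assms(1) unfolding linelev_def by blast
  obtain a2 where a2: "\<not> 4 dvd a2" "X = real_of_int a2 * mm powr (- real_of_int (i2+1))"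
    using assms(2) unfolding linelev_def by blast
  define d where "d = nat (i2 - i)"
  have d1: "d \<ge> 1" using assms(3) unfolding d_def by simp
  have ex: "- real_of_int (i+1) = real_of_int (i2 - i) + - real_of_int (i2+1)" by simp
  have "mm powr (- real_of_int (i+1)) = mm powr real_of_int (i2 - i) * mm powr (- real_of_int (i2+1))"
    unfolding ex by (rule powr_add)
  also have "mm powr real_of_int (i2 - i) = 4 ^ d" unfolding d_def using assms(3) by (intro mm_int_pow) simp
  finally have e: "mm powr (- real_of_int (i+1)) = 4 ^ d * mm powr (- real_of_int (i2+1))" .
  have "real_of_int a2 * mm powr (- real_of_int (i2+1)) = (real_of_int a * 4 ^ d) * mm powr (- real_of_int (i2+1))"
    using a(2) a2(2) e by (simp add: mult.assoc)
  hence "real_of_int a2 = real_of_int a * 4 ^ d" using mm_pos[of "- real_of_int (i2+1)"] by simp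
  hence "a2 = a * 4 ^ d" by (metis of_int_eq_iff of_int_mult of_int_numeral of_int_power)
  moreover have "4 dvd (4::int) ^ d" using d1 by (simp add: dvd_power)
  ultimately show False using a2(1) by simp
qed

lemma linelev_unique: assumes "linelev i X" "linelev i2 X" shows "i = i2"
  using linelev_lt[OF assms] linelev_lt[OF assms(2,1)] by (meson linorder_neqE)



lemma GS_TT: "L > 0 \<Longrightarrow> pushR L i (Rbase L) \<subseteq> TT L i"
  unfolding TT_def pushR_def using Rbase_BB by blast

lemma TT_lev: assumes "L > 0" "(z,w) \<in> TT L i" "z \<noteq> w"
  shows "fst z = fst w \<and> linelev i (fst z)"
  using TT_nontriv[OF assms] unfolding linelev_def by metis

definition UU :: "nat \<Rightarrow> int \<Rightarrow> ((real\<times>real)\<times>(real\<times>real)) set" where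
  "UU L j = {(z,w). z = w \<or> (fst z = fst w \<and> (\<exists>i<j. linelev i (fst z)))}"

lemma Rj_UU: assumes "L > 0" shows "Rj L j \<subseteq> UU L j"
  unfolding Rj_def
proof (rule eqcl_least)
  show "\<And>x. (x,x) \<in> UU L j" by (simp add: UU_def)
  show "\<And>x y. (x,y) \<in> UU L j \<Longrightarrow> (y,x) \<in> UU L j" unfolding UU_def by auto
  show "\<And>x y z. (x,y) \<in> UU L j \<Longrightarrow> (y,z) \<in> UU L j \<Longrightarrow> (x,z) \<in> UU L j" unfolding UU_def by auto
  show "(\<Union>i\<in>{i. i < j}. pushR L i (Rbase L)) \<subseteq> UU L j"
  proof
    fix pq assume "pq \<in> (\<Union>i\<in>{i. i < j}. pushR L i (Rbase L))"
    then obtain i z w where "i < j" "pq = (z,w)" "(z,w) \<in> TT L i" using GS_TT[OF assms] by (cases pq) blast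
    show "pq \<in> UU L j"
    proof (cases "z = w")
      case True thus ?thesis using \<open>pq = (z,w)\<close> unfolding UU_def by simp
    next
      case False
      hence "fst z = fst w \<and> linelev i (fst z)" using TT_lev[OF assms \<open>(z,w) \<in> TT L i\<close>] by blast
      thus ?thesis using \<open>pq = (z,w)\<close> \<open>i < j\<close> unfolding UU_def by auto
    qed
  qed
qed

lemma Rj_refl: "(x,x) \<in> Rj L j" unfolding Rj_def by (rule eqcl_refl)
lemma Rj_sym: "(x,y) \<in> Rj L j \<Longrightarrow> (y,x) \<in> Rj L j" unfolding Rj_def by (rule eqcl_sym)
lemma Rj_trans: "(x,y) \<in> Rj L j \<Longrightarrow> (y,z) \<in> Rj L j \<Longrightarrow> (x,z) \<in> Rj L j" unfolding Rj_def by (rule eqcl_trans)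
lemma Rj_mono: "j \<le> j' \<Longrightarrow> Rj L j \<subseteq> Rj L j'" unfolding Rj_def by (rule eqcl_mono) (smt (verit) SUP_mono mem_Collect_eq order_refl)

definition WW :: "nat \<Rightarrow> int set \<Rightarrow> int \<Rightarrow> ((real\<times>real)\<times>(real\<times>real)) set" where
  "WW L A j = Rj L j \<union> (\<Union>i\<in>{i\<in>A. j \<le> i}. TT L i)"

lemma Rj_TT_left: assumes "L > 0" "(x,y) \<in> Rj L j" "(y,z) \<in> TT L i" "j \<le> i" "y \<noteq> z"
  shows "x = y"
proof (rule ccontr)
  assume "x \<noteq> y"
  with Rj_UU[OF assms(1)] assms(2) obtain i2 where "i2 < j" "fst x = fst y" "linelev i2 (fst x)"
    unfolding UU_def by blast
  moreover have "linelev i (fst y)" using TT_lev[OF assms(1,3,5)] by blast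
  ultimately have "i2 = i" using linelev_unique by metis
  thus False using \<open>i2 < j\<close> assms(4) by simp
qed

lemma WW_closure: assumes "L > 0"
  shows "eqcl (\<Union>i\<in>A. pushR L i (Rbase L)) \<subseteq> WW L A j"
proof (rule eqcl_least)
  show "\<And>x. (x,x) \<in> WW L A j" unfolding WW_def using Rj_refl by blast
  show "(y,x) \<in> WW L A j" if xyW: "(x,y) \<in> WW L A j" for x y
  proof (cases "(x,y) \<in> Rj L j")
    case True thus ?thesis using Rj_sym[OF True] unfolding WW_def by blast
  next
    case False
    then obtain i where "i \<in> A" "j \<le> i" "(x,y) \<in> TT L i" using xyW unfolding WW_def by blast
    thus ?thesis using TT_sym[of x y L i] unfolding WW_def by blast
  qed
  show "(\<Union>i\<in>A. pushR L i (Rbase L)) \<subseteq> WW L A j"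
  proof
    fix pq assume "pq \<in> (\<Union>i\<in>A. pushR L i (Rbase L))"
    then obtain i where i: "i \<in> A" "pq \<in> pushR L i (Rbase L)" by blast
    show "pq \<in> WW L A j"
    proof (cases "i < j")
      case True
      hence "pq \<in> (\<Union>i\<in>{i. i < j}. pushR L i (Rbase L))" using i(2) by blast
      hence "pq \<in> Rj L j" unfolding Rj_def by (metis eqcl_incl prod.collapse)
      thus ?thesis unfolding WW_def by blast
    next
      case False
      hence "pq \<in> TT L i" "j \<le> i" using i(2) GS_TT[OF assms, of i] by auto
      thus ?thesis using i(1) unfolding WW_def by blast
    qed
  qed
  show "\<And>x y z. (x,y) \<in> WW L A j \<Longrightarrow> (y,z) \<in> WW L A j \<Longrightarrow> (x,z) \<in> WW L A j"
  proof -
    fix x y z assume xy: "(x,y) \<in> WW L A j" and yz: "(y,z) \<in> WW L A j"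
    show "(x,z) \<in> WW L A j"
    proof (cases "x = y \<or> y = z")
      case True thus ?thesis using xy yz by (elim disjE) simp_all
    next
      case False
      hence ne: "x \<noteq> y" "y \<noteq> z" by auto
      show ?thesis
      proof (cases "(x,y) \<in> Rj L j")
        case xR: True
        show ?thesis
        proof (cases "(y,z) \<in> Rj L j")
          case True thus ?thesis using xR Rj_trans unfolding WW_def by blast
        next
          case False
          then obtain i where "i \<in> A" "j \<le> i" "(y,z) \<in> TT L i" using yz unfolding WW_def by blast
          hence "x = y" using Rj_TT_left[OF assms xR _ _ ne(2)] by blast
          thus ?thesis using ne by simp
        qed
      next
        case xT: False
        then obtain i where i: "i \<in> A" "j \<le> i" "(x,y) \<in> TT L i" using xy unfolding WW_def by blast
        show ?thesis
        proof (cases "(y,z) \<in> Rj L j")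
          case True
          have "z = y" using Rj_TT_left[OF assms Rj_sym[OF True] TT_sym[OF i(3)] i(2)] ne(1) by blast
          thus ?thesis using ne by simp
        next
          case False
          then obtain i2 where i2: "i2 \<in> A" "j \<le> i2" "(y,z) \<in> TT L i2" using yz unfolding WW_def by blast
          have "linelev i (fst y)" using TT_lev[OF assms i(3) ne(1)] by metis
          moreover have "linelev i2 (fst y)" using TT_lev[OF assms i2(3) ne(2)] by blast
          ultimately have "i = i2" by (rule linelev_unique)
          hence "(x,z) \<in> TT L i" using TT_trans[OF assms i(3)] i2(3) by simp
          thus ?thesis using i unfolding WW_def by blast
        qed
      qed
    qed
  qed
qed



lemma mv_ge3: "L > 0 \<Longrightarrow> mv L \<ge> 3" by (simp add: mv_def)

lemma mv_pow_int: assumes "L > 0" "j \<le> j'"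
  shows "mv L powr (- real_of_int j) = real_of_int ((3 * int L) ^ nat (j' - j)) * mv L powr (- real_of_int j')"
proof -
  have ex: "- real_of_int j = real_of_int (j' - j) + - real_of_int j'" by simp
  have "mv L powr (- real_of_int j) = mv L powr real_of_int (j' - j) * mv L powr (- real_of_int j')"
    unfolding ex by (rule powr_add)
  also have "mv L powr real_of_int (j' - j) = mv L ^ nat (j' - j)"
    using assms powr_real_of_int[of "mv L" "j' - j"] mv_pos[OF assms(1)] by simp
  also have "mv L ^ nat (j' - j) = real_of_int ((3 * int L) ^ nat (j' - j))" by (simp add: mv_def)
  finally show ?thesis .
qed

lemma rect_meet:
  assumes L: "L > 0" and jj: "j \<le> j'" "j' \<le> i"
    and z: "z \<in> rectY L j a b" and w: "w \<in> rectY L j' a' b'" and zw: "(z,w) \<in> TT L i"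
  shows "rectY L j a b \<inter> rectY L j' a' b' \<noteq> {}"
proof (cases "z = w")
  case True thus ?thesis using z w by blast
next
  case False
  define S where "S = mv L powr (- real_of_int j)"
  define S' where "S' = mv L powr (- real_of_int j')"
  define s where "s = mv L powr (- real_of_int (i+1))"
  define Ni where "Ni = (3 * int L) ^ nat (j' - j)"
  have S'0: "S' > 0" unfolding S'_def using mvp_pos[OF L] .
  have SN: "S = real_of_int Ni * S'" unfolding S_def S'_def Ni_def using mv_pow_int[OF L jj(1)] .
  have mv3: "mv L \<ge> 3" using mv_ge3[OF L] .
  have "s * mv L = mv L powr (- real_of_int i)" unfolding s_def mv_step[OF L] using mv3 by simp
  also have "\<dots> \<le> S'" unfolding S'_def using jj(2) mv3 by (intro powr_mono) auto
  finally have smv: "s * mv L \<le> S'" .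
  have s0: "s > 0" unfolding s_def using mvp_pos[OF L] .
  have s2: "2 * s < S'"
  proof -
    have "3 * s \<le> s * mv L" using mv3 s0 by (simp add: mult.commute mult_right_mono)
    thus ?thesis using smv s0 by linarith
  qed
  obtain a0 b0 where N: "fst w = fst z"
     "real_of_int b0 * s \<le> snd z" "snd z \<le> real_of_int (b0+2) * s"
     "real_of_int b0 * s \<le> snd w" "snd w \<le> real_of_int (b0+2) * s"
    using TT_nontriv[OF L zw False] unfolding s_def by blast
  have diff: "\<bar>snd z - snd w\<bar> \<le> 2 * s" using N by (simp add: algebra_simps abs_le_iff)
  from z have zx: "real_of_int a * mm powr (- real_of_int j) \<le> fst z" "fst z \<le> real_of_int (a+1) * mm powr (- real_of_int j)"
    and zy: "real_of_int b * S \<le> snd z" "snd z \<le> real_of_int (b+1) * S"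
    unfolding rectY_def S_def by (auto simp: case_prod_beta)
  from w have wx: "real_of_int a' * mm powr (- real_of_int j') \<le> fst w" "fst w \<le> real_of_int (a'+1) * mm powr (- real_of_int j')"
    and wy: "real_of_int b' * S' \<le> snd w" "snd w \<le> real_of_int (b'+1) * S'"
    unfolding rectY_def S'_def by (auto simp: case_prod_beta)
  have c1: "real_of_int b * S \<le> real_of_int (b'+1) * S'"
  proof (rule ccontr)
    assume "\<not> ?thesis"
    hence "real_of_int (b'+1) * S' < real_of_int (b * Ni) * S'" unfolding SN by (simp add: mult.assoc)
    hence "real_of_int (b'+1) < real_of_int (b * Ni)" using S'0 by simp
    hence "b' + 1 \<le> b * Ni - 1" by linarith
    hence "real_of_int (b'+1) \<le> real_of_int (b * Ni - 1)" by linarith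
    hence "real_of_int (b'+1) * S' \<le> real_of_int (b * Ni - 1) * S'" using S'0 by (intro mult_right_mono) auto
    also have "\<dots> = real_of_int b * S - S'" unfolding SN by (simp add: algebra_simps)
    finally have "snd z - snd w \<ge> S'" using zy(1) wy(2) by linarith
    thus False using diff s2 by linarith
  qed
  have c2: "real_of_int b' * S' \<le> real_of_int (b+1) * S"
  proof (rule ccontr)
    assume "\<not> ?thesis"
    hence "real_of_int ((b+1) * Ni) * S' < real_of_int b' * S'" unfolding SN by (simp add: mult.assoc)
    hence "real_of_int ((b+1) * Ni) < real_of_int b'" using S'0 by simp
    hence "(b+1) * Ni \<le> b' - 1" by linarith
    hence "real_of_int ((b+1) * Ni) \<le> real_of_int (b' - 1)" by linarith
    hence "real_of_int ((b+1) * Ni) * S' \<le> real_of_int (b' - 1) * S'" using S'0 by (intro mult_right_mono) auto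
    hence "real_of_int (b+1) * S \<le> real_of_int b' * S' - S'" unfolding SN by (simp add: algebra_simps)
    hence "snd w - snd z \<ge> S'" using zy(2) wy(1) by linarith
    thus False using diff s2 by linarith
  qed
  have Sp: "S > 0" unfolding S_def using mvp_pos[OF L] .
  have o1: "real_of_int b * S \<le> real_of_int (b+1) * S" using Sp by (intro mult_right_mono) auto
  have o2: "real_of_int b' * S' \<le> real_of_int (b'+1) * S'" using S'0 by (intro mult_right_mono) auto
  define y where "y = max (real_of_int b * S) (real_of_int b' * S')"
  have "(fst z, y) \<in> rectY L j a b" unfolding rectY_def S_def[symmetric] y_def using zx o1 c2 by auto
  moreover have "(fst z, y) \<in> rectY L j' a' b'" unfolding rectY_def S'_def[symmetric] y_def using wx N(1) o2 c1 by auto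
  ultimately show ?thesis by blast
qed

lemma vpath:
  assumes L: "L > 0" and zw: "(z,w) \<in> TT L j" "z \<noteq> w"
  shows "vpath_le2 L j {qmap (Rj L j) z, qmap (Rj L j) w}"
proof -
  define s where "s = mv L powr (- real_of_int (j+1))"
  obtain a b where N: "fst z = real_of_int a * mm powr (- real_of_int (j+1))" "fst w = fst z"
     "real_of_int b * s \<le> snd z" "snd z \<le> real_of_int (b+2) * s"
     "real_of_int b * s \<le> snd w" "snd w \<le> real_of_int (b+2) * s"
    using TT_nontriv[OF L zw] unfolding s_def by blast
  have mem: "u \<in> vedgeY L (j+1) a b \<union> vedgeY L (j+1) a (b+1)"
    if "fst u = real_of_int a * mm powr (- real_of_int (j+1))"
       "real_of_int b * s \<le> snd u" "snd u \<le> real_of_int (b+2) * s" for u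
  proof (cases "snd u \<le> real_of_int (b+1) * s")
    case True
    hence "u \<in> vedgeY L (j+1) a b" using that unfolding vedgeY_def s_def by (cases u) simp
    thus ?thesis by blast
  next
    case False
    have "real_of_int (b+1+1) = real_of_int (b+2)" by simp
    hence "u \<in> vedgeY L (j+1) a (b+1)" using that False unfolding vedgeY_def s_def by (cases u) (simp add: add.commute)
    thus ?thesis by blast
  qed
  define e where "e = (real_of_int a * mm powr (- real_of_int (j+1)), real_of_int (b+1) * s)"
  have "e \<in> vendsY L (j+1) a b" unfolding e_def vendsY_def s_def by simp
  moreover have "e \<in> vendsY L (j+1) a (b+1)" unfolding e_def vendsY_def s_def by simp
  ultimately have "qmap (Rj L j) e \<in> vendsX1 L j a b \<inter> vendsX1 L j a (b+1)" unfolding vendsX1_def by blast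
  moreover have "{qmap (Rj L j) z, qmap (Rj L j) w} \<subseteq> vedgeX1 L j a b \<union> vedgeX1 L j a (b+1)"
    using mem[of z] mem[of w] N unfolding vedgeX1_def by auto
  ultimately show ?thesis unfolding vpath_le2_def by blast
qed



lemma pimap_qmap: "pimap L j (qmap (Rj L j) z) = qmap (Rj L (j+1)) z"
proof
  show "pimap L j (qmap (Rj L j) z) \<subseteq> qmap (Rj L (j+1)) z"
  proof
    fix w assume "w \<in> pimap L j (qmap (Rj L j) z)"
    then obtain u where "(z,u) \<in> Rj L j" "(u,w) \<in> Rj L (j+1)" unfolding pimap_def qmap_def by blast
    moreover have "(z,u) \<in> Rj L (j+1)" using Rj_mono[of j "j+1" L] calculation(1) by auto
    ultimately show "w \<in> qmap (Rj L (j+1)) z" unfolding qmap_def using Rj_trans by blast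
  qed
  show "qmap (Rj L (j+1)) z \<subseteq> pimap L j (qmap (Rj L j) z)"
    unfolding pimap_def qmap_def using Rj_refl by blast
qed

lemma qmap_rel: assumes "\<And>x. (x,x) \<in> R" "qmap R z = qmap R w" shows "(z,w) \<in> R"
proof -
  have "w \<in> qmap R w" unfolding qmap_def using assms(1) by blast
  thus ?thesis using assms(2) unfolding qmap_def by blast
qed

lemma Rj_qmap: assumes "(z,w) \<in> Rj L j" shows "qmap (Rj L j) z = qmap (Rj L j) w"
proof -
  have "(w,z) \<in> Rj L j" using Rj_sym[OF assms] .
  thus ?thesis unfolding qmap_def using assms Rj_trans by blast
qed

lemma Rinf_refl: "(x,x) \<in> Rinf L" unfolding Rinf_def by (rule eqcl_refl)

lemma part1: assumes L: "L > 0" and p: "p \<in> Xsp L j" and p': "p' \<in> Xsp L j" and ne: "p \<noteq> p'"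
  and eq: "pimap L j p = pimap L j p'"
  shows "vpath_le2 L j {p, p'}"
proof -
  obtain z where z: "p = qmap (Rj L j) z" using p unfolding Xsp_def qmap_def by (auto elim: quotientE)
  obtain z' where z': "p' = qmap (Rj L j) z'" using p' unfolding Xsp_def qmap_def by (auto elim: quotientE)
  have "qmap (Rj L (j+1)) z = qmap (Rj L (j+1)) z'" using eq unfolding z z' pimap_qmap .
  hence "(z,z') \<in> Rj L (j+1)" by (rule qmap_rel[OF Rj_refl])
  hence W: "(z,z') \<in> WW L {i. i < j+1} j" using WW_closure[OF L, of "{i. i < j+1}" j] unfolding Rj_def by blast
  have nR: "(z,z') \<notin> Rj L j" using Rj_qmap ne z z' by blast
  then obtain i where i: "i < j+1" "j \<le> i" "(z,z') \<in> TT L i" using W unfolding WW_def by blast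
  have "i = j" using i by simp
  moreover have "z \<noteq> z'" using ne z z' by blast
  ultimately show ?thesis using vpath[OF L] i(3) z z' by blast
qed

lemma part2: assumes L: "L > 0" and s: "cell2X L j \<sigma>" and s': "cell2X L j \<sigma>'"
  and m: "pimap L j ` \<sigma> \<inter> pimap L j ` \<sigma>' \<noteq> {}"
  shows "\<sigma> \<inter> \<sigma>' \<noteq> {}"
proof -
  obtain a b where sa: "\<sigma> = qmap (Rj L j) ` rectY L j a b" using s unfolding cell2X_def by (elim exE)
  obtain a' b' where sa': "\<sigma>' = qmap (Rj L j) ` rectY L j a' b'" using s' unfolding cell2X_def by (elim exE)
  obtain v where v: "v \<in> pimap L j ` \<sigma>" "v \<in> pimap L j ` \<sigma>'" using m by (meson IntE ex_in_conv)
  obtain z where z1: "z \<in> rectY L j a b" "v = pimap L j (qmap (Rj L j) z)" using v(1) unfolding sa by (elim imageE) auto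
  obtain z' where z2: "z' \<in> rectY L j a' b'" "v = pimap L j (qmap (Rj L j) z')" using v(2) unfolding sa' by (elim imageE) auto
  have zz: "z \<in> rectY L j a b" "z' \<in> rectY L j a' b'" using z1(1) z2(1) .
  have "qmap (Rj L (j+1)) z = qmap (Rj L (j+1)) z'" using z1(2) z2(2) unfolding pimap_qmap by simp
  hence "(z,z') \<in> Rj L (j+1)" by (rule qmap_rel[OF Rj_refl])
  hence W: "(z,z') \<in> WW L {i. i < j+1} j" using WW_closure[OF L, of "{i. i < j+1}" j] unfolding Rj_def by blast
  show ?thesis
  proof (cases "(z,z') \<in> Rj L j")
    case True
    have "qmap (Rj L j) z \<in> \<sigma>" unfolding sa using zz(1) by (rule imageI)
    moreover have "qmap (Rj L j) z \<in> \<sigma>'" unfolding sa' Rj_qmap[OF True] using zz(2) by (rule imageI)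
    ultimately have "qmap (Rj L j) z \<in> \<sigma> \<inter> \<sigma>'" by blast
    thus ?thesis by blast
  next
    case False
    then obtain i where i: "i < j+1" "j \<le> i" "(z,z') \<in> TT L i" using W unfolding WW_def by blast
    have "i = j" using i by simp
    then obtain u where "u \<in> rectY L j a b" "u \<in> rectY L j a' b'"
      using rect_meet[OF L order_refl order_refl zz(1,2)] i(3) by blast
    hence "qmap (Rj L j) u \<in> \<sigma> \<inter> \<sigma>'" unfolding sa sa' by blast
    thus ?thesis by blast
  qed
qed

lemma part3: assumes L: "L > 0" and jj: "j \<le> j'" and s: "cell2Y L j \<sigma>" and s': "cell2Y L j' \<sigma>'"
  and m: "qmap (Rinf L) ` \<sigma> \<inter> qmap (Rinf L) ` \<sigma>' \<noteq> {}"
  shows "qmap (Rj L j') ` \<sigma> \<inter> qmap (Rj L j') ` \<sigma>' \<noteq> {}"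
proof -
  obtain a b where sa: "\<sigma> = rectY L j a b" using s unfolding cell2Y_def by (elim exE)
  obtain a' b' where sa': "\<sigma>' = rectY L j' a' b'" using s' unfolding cell2Y_def by (elim exE)
  obtain v where v: "v \<in> qmap (Rinf L) ` \<sigma>" "v \<in> qmap (Rinf L) ` \<sigma>'" using m by (meson IntE ex_in_conv)
  obtain z where z1: "z \<in> \<sigma>" "v = qmap (Rinf L) z" using v(1) by (elim imageE) auto
  obtain z' where z2: "z' \<in> \<sigma>'" "v = qmap (Rinf L) z'" using v(2) by (elim imageE) auto
  have zz: "z \<in> \<sigma>" "z' \<in> \<sigma>'" "qmap (Rinf L) z = qmap (Rinf L) z'" using z1 z2 by simp_all
  have "(z,z') \<in> Rinf L" using qmap_rel[OF Rinf_refl zz(3)] .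
  hence W: "(z,z') \<in> WW L UNIV j'" using WW_closure[OF L, of UNIV j'] unfolding Rinf_def by blast
  show ?thesis
  proof (cases "(z,z') \<in> Rj L j'")
    case True
    have "qmap (Rj L j') z \<in> qmap (Rj L j') ` \<sigma>" using zz(1) by (rule imageI)
    moreover have "qmap (Rj L j') z \<in> qmap (Rj L j') ` \<sigma>'" unfolding Rj_qmap[OF True] using zz(2) by (rule imageI)
    ultimately have "qmap (Rj L j') z \<in> qmap (Rj L j') ` \<sigma> \<inter> qmap (Rj L j') ` \<sigma>'" by blast
    thus ?thesis by blast
  next
    case False
    then obtain i where i: "j' \<le> i" "(z,z') \<in> TT L i" using W unfolding WW_def by blast
    then obtain u where "u \<in> \<sigma>" "u \<in> \<sigma>'"
      using rect_meet[OF L jj i(1), of z a b z' a' b'] zz(1,2) unfolding sa sa' by blast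
    thus ?thesis by blast
  qed
qed

theorem mainTheorem4:
  fixes L :: nat
  assumes "L \<ge> 100"
  shows
    "(\<forall>j p p'. p \<in> Xsp L j \<and> p' \<in> Xsp L j \<and> p \<noteq> p' \<and> pimap L j p = pimap L j p'
         \<longrightarrow> vpath_le2 L j {p, p'})
   \<and> (\<forall>j \<sigma> \<sigma>'. cell2X L j \<sigma> \<and> cell2X L j \<sigma>' \<and> pimap L j ` \<sigma> \<inter> pimap L j ` \<sigma>' \<noteq> {}
         \<longrightarrow> \<sigma> \<inter> \<sigma>' \<noteq> {})
   \<and> (\<forall>j j' \<sigma> \<sigma>'. j \<le> j' \<and> cell2Y L j \<sigma> \<and> cell2Y L j' \<sigma>'
         \<and> qmap (Rinf L) ` \<sigma> \<inter> qmap (Rinf L) ` \<sigma>' \<noteq> {}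
         \<longrightarrow> qmap (Rj L j') ` \<sigma> \<inter> qmap (Rj L j') ` \<sigma>' \<noteq> {})"
proof -
  have L: "L > 0" using assms by simp
  show ?thesis
  proof (intro conjI allI impI)
    fix j p p' assume "p \<in> Xsp L j \<and> p' \<in> Xsp L j \<and> p \<noteq> p' \<and> pimap L j p = pimap L j p'"
    thus "vpath_le2 L j {p, p'}" by (elim conjE) (rule part1[OF L], assumption+)
  next
    fix j \<sigma> \<sigma>' assume "cell2X L j \<sigma> \<and> cell2X L j \<sigma>' \<and> pimap L j ` \<sigma> \<inter> pimap L j ` \<sigma>' \<noteq> {}"
    thus "\<sigma> \<inter> \<sigma>' \<noteq> {}" by (elim conjE) (rule part2[OF L], assumption+)
  next
    fix j j' \<sigma> \<sigma>' assume "j \<le> j' \<and> cell2Y L j \<sigma> \<and> cell2Y L j' \<sigma>'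
         \<and> qmap (Rinf L) ` \<sigma> \<inter> qmap (Rinf L) ` \<sigma>' \<noteq> {}"
    thus "qmap (Rj L j') ` \<sigma> \<inter> qmap (Rj L j') ` \<sigma>' \<noteq> {}" by (elim conjE) (rule part3[OF L], assumption+)
  qed
qed


end
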